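(* Let $P$ be a finite poset. For every $k=0,1,\ldots,\#P$, the $k$-chain distribution $\mathrm{chain}(k)$ on the distributive lattice $J(P)$ is toggle-symmetric.
   Context: $J(P)$ is the set of order ideals (down-closed subsets) of $P$ ordered by inclusion. A $k$-chain of $J(P)$ is $I_0\subsetneq I_1\subsetneq\cdots\subsetneq I_k$; $\mathrm{chain}(k)$ gives $I\in J(P)$ probability $\#\{k\text{-chains containing } I\}/((k+1)\#\{k\text{-chains of } J(P)\})$. For $p\in P$ and $I\in J(P)$: $\mathcal{T}^+_p(I)=1$ if $p\notin I$ and $p$ is a minimal element of $P\setminus I$, else $0$; $\mathcal{T}^-_p(I)=1$ if $p\in I$ and $p$ is a maximal element of $I$, else $0$. A distribution $\mu$ on $J(P)$ is toggle-symmetric if $\mathbb{E}(\mu;\mathcal{T}^+_p)=\mathbb{E}(\mu;\mathcal{T}^-_p)$ for all $p\in P$, where $\mathbb{E}(\mu;f)=\sum_I f(I)\mathbb{P}(\mu;I)$. *)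

theory Defs
  imports Complex_Main
begin

definition is_poset :: "'a set \<Rightarrow> ('a \<Rightarrow> 'a \<Rightarrow> bool) \<Rightarrow> bool" where
  "is_poset P le \<longleftrightarrow>
     (\<forall>x\<in>P. le x x) \<and>
     (\<forall>x\<in>P. \<forall>y\<in>P. le x y \<and> le y x \<longrightarrow> x = y) \<and>
     (\<forall>x\<in>P. \<forall>y\<in>P. \<forall>z\<in>P. le x y \<and> le y z \<longrightarrow> le x z)"

definition order_ideals :: "'a set \<Rightarrow> ('a \<Rightarrow> 'a \<Rightarrow> bool) \<Rightarrow> 'a set set" where
  "order_ideals P le = {I. I \<subseteq> P \<and> (\<forall>x\<in>I. \<forall>y\<in>P. le y x \<longrightarrow> y \<in> I)}"

definition k_chains :: "'a set \<Rightarrow> ('a \<Rightarrow> 'a \<Rightarrow> bool) \<Rightarrow> nat \<Rightarrow> 'a set list set" where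
  "k_chains P le k = {cs. length cs = Suc k \<and> set cs \<subseteq> order_ideals P le \<and>
                          sorted_wrt (\<subset>) cs}"

definition chain_prob :: "'a set \<Rightarrow> ('a \<Rightarrow> 'a \<Rightarrow> bool) \<Rightarrow> nat \<Rightarrow> 'a set \<Rightarrow> real" where
  "chain_prob P le k I =
     real (card {cs \<in> k_chains P le k. I \<in> set cs}) /
     (real (Suc k) * real (card (k_chains P le k)))"

definition toggle_plus :: "'a set \<Rightarrow> ('a \<Rightarrow> 'a \<Rightarrow> bool) \<Rightarrow> 'a \<Rightarrow> 'a set \<Rightarrow> real" where
  "toggle_plus P le p I =
     (if p \<in> P \<and> p \<notin> I \<and> (\<forall>q\<in>P - I. le q p \<longrightarrow> q = p) then 1 else 0)"

definition toggle_minus :: "'a set \<Rightarrow> ('a \<Rightarrow> 'a \<Rightarrow> bool) \<Rightarrow> 'a \<Rightarrow> 'a set \<Rightarrow> real" where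
  "toggle_minus P le p I =
     (if p \<in> I \<and> (\<forall>q\<in>I. le p q \<longrightarrow> q = p) then 1 else 0)"

definition expect :: "'a set \<Rightarrow> ('a \<Rightarrow> 'a \<Rightarrow> bool) \<Rightarrow> ('a set \<Rightarrow> real) \<Rightarrow> ('a set \<Rightarrow> real) \<Rightarrow> real" where
  "expect P le mu f = (\<Sum>I\<in>order_ideals P le. f I * mu I)"

definition toggle_symmetric :: "'a set \<Rightarrow> ('a \<Rightarrow> 'a \<Rightarrow> bool) \<Rightarrow> ('a set \<Rightarrow> real) \<Rightarrow> bool" where
  "toggle_symmetric P le mu \<longleftrightarrow>
     (\<forall>p\<in>P. expect P le mu (toggle_plus P le p) = expect P le mu (toggle_minus P le p))"

end

theory Submission
  imports Defs
begin

locale tg =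
  fixes P :: "'a set" and le :: "'a \<Rightarrow> 'a \<Rightarrow> bool" and k :: nat and p :: 'a
  assumes finP: "finite P" and pP: "p \<in> P"
begin

definition Fk :: "('a \<Rightarrow> nat) set" where
  "Fk = {f. (\<forall>x. x \<notin> P \<longrightarrow> f x = 0) \<and> (\<forall>x\<in>P. f x \<le> Suc k) \<and>
        (\<forall>x\<in>P. \<forall>y\<in>P. le x y \<longrightarrow> f x \<le> f y) \<and> (\<forall>j. 1 \<le> j \<and> j \<le> k \<longrightarrow> (\<exists>x\<in>P. f x = j))}"

definition chain_of :: "('a \<Rightarrow> nat) \<Rightarrow> 'a set list" where
  "chain_of f = map (\<lambda>i. {x\<in>P. f x \<le> i}) [0..<Suc k]"

definition fn_of :: "'a set list \<Rightarrow> 'a \<Rightarrow> nat" where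
  "fn_of c = (\<lambda>x. if x \<in> P then card {i. i < Suc k \<and> x \<notin> c!i} else 0)"

lemma chain_of_nth: "i < Suc k \<Longrightarrow> chain_of f ! i = {x\<in>P. f x \<le> i}"
  unfolding chain_of_def by (simp del: upt_Suc)

lemma chain_of_len: "length (chain_of f) = Suc k"
  unfolding chain_of_def by simp

lemma chain_mono:
  assumes c: "c \<in> k_chains P le k" and ij: "i \<le> j" "j < Suc k"
  shows "c!i \<subseteq> c!j"
proof (cases "i = j")
  case False
  then have "i < j" using ij by simp
  moreover have "sorted_wrt (\<subset>) c" "length c = Suc k" using c by (auto simp: k_chains_def)
  ultimately show ?thesis using ij sorted_wrt_nth_less[of "(\<subset>)" c i j] by auto
qed simp

lemma chain_ideal:
  assumes c: "c \<in> k_chains P le k" and i: "i < Suc k"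
  shows "c!i \<in> order_ideals P le"
  using c i by (auto simp: k_chains_def)

lemma mem_iff:
  assumes c: "c \<in> k_chains P le k" and x: "x \<in> P" and i: "i < Suc k"
  shows "x \<in> c!i \<longleftrightarrow> fn_of c x \<le> i"
proof
  assume xi: "x \<in> c!i"
  have "{t. t < Suc k \<and> x \<notin> c!t} \<subseteq> {..<i}"
  proof
    fix t assume t: "t \<in> {t. t < Suc k \<and> x \<notin> c!t}"
    show "t \<in> {..<i}"
    proof (rule ccontr)
      assume "t \<notin> {..<i}"
      then have "c!i \<subseteq> c!t" using chain_mono[OF c, of i t] t by auto
      then show False using xi t by auto
    qed
  qed
  then have "card {t. t < Suc k \<and> x \<notin> c!t} \<le> i"
    using card_mono[of "{..<i}"] by fastforce
  then show "fn_of c x \<le> i" using x by (simp add: fn_of_def)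
next
  assume h: "fn_of c x \<le> i"
  show "x \<in> c!i"
  proof (rule ccontr)
    assume xi: "x \<notin> c!i"
    have "{..i} \<subseteq> {t. t < Suc k \<and> x \<notin> c!t}"
    proof
      fix t assume "t \<in> {..i}"
      then have "c!t \<subseteq> c!i" using chain_mono[OF c, of t i] i by auto
      then show "t \<in> {t. t < Suc k \<and> x \<notin> c!t}" using xi i \<open>t \<in> {..i}\<close> by auto
    qed
    then have "card {..i} \<le> card {t. t < Suc k \<and> x \<notin> c!t}"
      by (intro card_mono) auto
    then show False using h x by (simp add: fn_of_def)
  qed
qed

lemma chain_of_in:
  assumes f: "f \<in> Fk"
  shows "chain_of f \<in> k_chains P le k"
proof -
  have "sorted_wrt (\<subset>) (chain_of f)"
    unfolding sorted_wrt_iff_nth_less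
  proof (intro allI impI)
    fix i j assume ij: "i < j" "j < length (chain_of f)"
    then have j: "j < Suc k" by (simp add: chain_of_len)
    have "1 \<le> j \<and> j \<le> k" using ij j by simp
    then obtain x where x: "x \<in> P" "f x = j" using f unfolding Fk_def by blast
    have "{x\<in>P. f x \<le> i} \<subset> {x\<in>P. f x \<le> j}"
    proof (rule psubsetI)
      show "{x\<in>P. f x \<le> i} \<subseteq> {x\<in>P. f x \<le> j}" using ij by auto
      have "x \<in> {x\<in>P. f x \<le> j}" "x \<notin> {x\<in>P. f x \<le> i}" using ij x by auto
      then show "{x\<in>P. f x \<le> i} \<noteq> {x\<in>P. f x \<le> j}" by blast
    qed
    then show "chain_of f ! i \<subset> chain_of f ! j"
      using ij j by (simp add: chain_of_nth)
  qed
  moreover have "set (chain_of f) \<subseteq> order_ideals P le"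
  proof
    fix I assume "I \<in> set (chain_of f)"
    then obtain i where I: "I = {x\<in>P. f x \<le> i}" unfolding chain_of_def by auto
    have mono: "\<forall>x\<in>P. \<forall>y\<in>P. le x y \<longrightarrow> f x \<le> f y" using f by (simp add: Fk_def)
    have "\<forall>x\<in>{x\<in>P. f x \<le> i}. \<forall>y\<in>P. le y x \<longrightarrow> y \<in> {x\<in>P. f x \<le> i}"
      using mono by fastforce
    then show "I \<in> order_ideals P le" unfolding order_ideals_def I by blast
  qed
  ultimately show ?thesis by (simp add: k_chains_def chain_of_len)
qed

lemma fn_of_chain_of:
  assumes f: "f \<in> Fk"
  shows "fn_of (chain_of f) = f"
proof
  fix x
  show "fn_of (chain_of f) x = f x"
  proof (cases "x \<in> P")
    case True
    have "{i. i < Suc k \<and> x \<notin> chain_of f ! i} = {..<f x}"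
      using True f by (auto simp: chain_of_def Fk_def nth_append simp del: upt_Suc)
    then show ?thesis using True by (simp add: fn_of_def)
  next
    case False
    then show ?thesis using f by (simp add: fn_of_def Fk_def)
  qed
qed

lemma chain_of_fn_of:
  assumes c: "c \<in> k_chains P le k"
  shows "chain_of (fn_of c) = c"
proof (rule nth_equalityI)
  show "length (chain_of (fn_of c)) = length c" using c by (simp add: chain_of_def k_chains_def)
  fix i assume "i < length (chain_of (fn_of c))"
  then have i: "i < Suc k" by (simp add: chain_of_def)
  have sub: "c!i \<subseteq> P" using chain_ideal[OF c i] by (simp add: order_ideals_def)
  have "{x\<in>P. fn_of c x \<le> i} = c!i"
    using mem_iff[OF c _ i] sub by auto
  then show "chain_of (fn_of c) ! i = c ! i" using i
    by (simp add: chain_of_def nth_append del: upt_Suc)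
qed

lemma fn_of_in:
  assumes c: "c \<in> k_chains P le k"
  shows "fn_of c \<in> Fk"
  unfolding Fk_def
proof (intro CollectI conjI allI ballI impI)
  fix x assume "x \<notin> P" then show "fn_of c x = 0" by (simp add: fn_of_def)
next
  fix x assume x: "x \<in> P"
  have "card {i. i < Suc k \<and> x \<notin> c!i} \<le> card {..<Suc k}"
    by (intro card_mono) auto
  then show "fn_of c x \<le> Suc k" using x by (simp add: fn_of_def)
next
  fix x y assume x: "x \<in> P" and y: "y \<in> P" and xy: "le x y"
  have "{i. i < Suc k \<and> x \<notin> c!i} \<subseteq> {i. i < Suc k \<and> y \<notin> c!i}"
  proof
    fix i assume i: "i \<in> {i. i < Suc k \<and> x \<notin> c!i}"
    have "c!i \<in> order_ideals P le" using chain_ideal[OF c] i by auto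
    then show "i \<in> {i. i < Suc k \<and> y \<notin> c!i}" using i x xy by (auto simp: order_ideals_def)
  qed
  then have "card {i. i < Suc k \<and> x \<notin> c!i} \<le> card {i. i < Suc k \<and> y \<notin> c!i}"
    by (intro card_mono) auto
  then show "fn_of c x \<le> fn_of c y" using x y by (simp add: fn_of_def)
next
  fix j assume j: "1 \<le> j \<and> j \<le> k"
  have "sorted_wrt (\<subset>) c" "length c = Suc k" using c by (auto simp: k_chains_def)
  then have "c!(j-1) \<subset> c!j" using j sorted_wrt_nth_less[of "(\<subset>)" c "j-1" j] by auto
  then obtain x where x: "x \<in> c!j" "x \<notin> c!(j-1)" by auto
  have xP: "x \<in> P" using chain_ideal[OF c, of j] j x by (auto simp: order_ideals_def)
  have "fn_of c x \<le> j" using mem_iff[OF c xP, of j] x j by auto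
  moreover have "j - 1 < Suc k" using j by linarith
  then have "\<not> fn_of c x \<le> j - 1" using mem_iff[OF c xP, of "j-1"] x by blast
  ultimately show "\<exists>x\<in>P. fn_of c x = j" using xP j by (intro bexI[of _ x]) auto
qed

lemma bij_chain_of: "bij_betw chain_of Fk (k_chains P le k)"
  by (rule bij_betw_byWitness[where f' = fn_of])
     (auto simp: fn_of_chain_of chain_of_fn_of chain_of_in fn_of_in)


lemma finJ: "finite (order_ideals P le)"
proof -
  have "order_ideals P le \<subseteq> Pow P" by (auto simp: order_ideals_def)
  then show ?thesis by (rule finite_subset) (simp add: finP)
qed

lemma finC: "finite (k_chains P le k)"
proof -
  have "finite (order_ideals P le)" by (rule finJ)
  then have "finite {xs. set xs \<subseteq> order_ideals P le \<and> length xs = Suc k}"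
    by (rule finite_lists_length_eq)
  then show ?thesis by (rule finite_subset[rotated]) (auto simp: k_chains_def)
qed

lemma sum_indicator: "finite A \<Longrightarrow> (\<Sum>i\<in>A. if Q i then 1 else (0::real)) = real (card {i\<in>A. Q i})"
  by (simp add: sum.inter_filter[symmetric])

lemma chain_distinct:
  assumes c: "c \<in> k_chains P le k"
  shows "distinct c"
proof -
  have s: "sorted_wrt (\<subset>) c" using c by (simp add: k_chains_def)
  show ?thesis unfolding distinct_conv_nth
  proof (intro allI impI)
    fix i j assume ij: "i < length c" "j < length c" "i \<noteq> j"
    show "c!i \<noteq> c!j"
    proof (cases "i < j")
      case True then show ?thesis using sorted_wrt_nth_less[OF s True ij(2)] by auto
    next
      case False then have "j < i" using ij by simp
      then show ?thesis using sorted_wrt_nth_less[OF s _ ij(1)] by auto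
    qed
  qed
qed

lemma sum_chain:
  assumes c: "c \<in> k_chains P le k"
  shows "(\<Sum>I\<in>set c. T I) = (\<Sum>i<Suc k. T (c!i))"
proof -
  have len: "length c = Suc k" using c by (simp add: k_chains_def)
  have "(\<Sum>I\<in>set c. T I) = sum_list (map T c)"
    using chain_distinct[OF c] by (simp add: sum_list_distinct_conv_sum_set)
  also have "\<dots> = sum ((!) (map T c)) {0..<length (map T c)}" by (rule sum_list_sum_nth)
  also have "\<dots> = (\<Sum>i<Suc k. T (c!i))"
    using len by (intro sum.cong) auto
  finally show ?thesis .
qed

lemma expect_red:
  "expect P le (chain_prob P le k) T =
     (\<Sum>c\<in>k_chains P le k. \<Sum>i<Suc k. T (c!i)) / (real (Suc k) * real (card (k_chains P le k)))"
proof -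
  let ?C = "k_chains P le k" and ?J = "order_ideals P le"
  let ?d = "real (Suc k) * real (card ?C)"
  have "expect P le (chain_prob P le k) T = (\<Sum>I\<in>?J. T I * real (card {cs \<in> ?C. I \<in> set cs})) / ?d"
    unfolding expect_def chain_prob_def by (simp add: sum_divide_distrib)
  also have "(\<Sum>I\<in>?J. T I * real (card {cs \<in> ?C. I \<in> set cs}))
      = (\<Sum>I\<in>?J. \<Sum>cs\<in>?C. if I \<in> set cs then T I else 0)"
  proof (rule sum.cong[OF refl])
    fix I
    have "real (card {cs \<in> ?C. I \<in> set cs}) = (\<Sum>cs\<in>{cs \<in> ?C. I \<in> set cs}. 1)" by simp
    also have "\<dots> = (\<Sum>cs\<in>?C. if I \<in> set cs then 1 else 0)"
      using finC by (rule sum.inter_filter)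
    finally have h: "real (card {cs \<in> ?C. I \<in> set cs}) = (\<Sum>cs\<in>?C. if I \<in> set cs then 1 else 0)" .
    show "T I * real (card {cs \<in> ?C. I \<in> set cs}) = (\<Sum>cs\<in>?C. if I \<in> set cs then T I else 0)"
      unfolding h sum_distrib_left by (intro sum.cong) auto
  qed
  also have "\<dots> = (\<Sum>cs\<in>?C. \<Sum>I\<in>?J. if I \<in> set cs then T I else 0)"
    by (rule sum.swap)
  also have "\<dots> = (\<Sum>cs\<in>?C. \<Sum>i<Suc k. T (cs!i))"
  proof (rule sum.cong[OF refl])
    fix cs assume cs: "cs \<in> ?C"
    have "(\<Sum>I\<in>?J. if I \<in> set cs then T I else 0) = (\<Sum>I\<in>{I\<in>?J. I \<in> set cs}. T I)"
      using finJ by (rule sum.inter_filter[symmetric])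
    also have "{I\<in>?J. I \<in> set cs} = set cs" using cs by (auto simp: k_chains_def)
    finally show "(\<Sum>I\<in>?J. if I \<in> set cs then T I else 0) = (\<Sum>i<Suc k. T (cs!i))"
      using sum_chain[OF cs] by simp
  qed
  finally show ?thesis .
qed

definition D where "D = {q\<in>P. le q p \<and> q \<noteq> p}"
definition U where "U = {q\<in>P. le p q \<and> q \<noteq> p}"
definition mf :: "('a \<Rightarrow> nat) \<Rightarrow> nat" where "mf f = Max (insert 0 (f ` D))"
definition Mf :: "('a \<Rightarrow> nat) \<Rightarrow> nat" where "Mf f = Min (insert (Suc k) (f ` U))"

lemma finD: "finite D" using finP by (simp add: D_def)
lemma finU: "finite U" using finP by (simp add: U_def)

lemma mf_le_iff: "mf f \<le> i \<longleftrightarrow> (\<forall>q\<in>D. f q \<le> i)"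
  unfolding mf_def using finD by simp

lemma Mf_gt_iff: "i < Suc k \<Longrightarrow> i < Mf f \<longleftrightarrow> (\<forall>q\<in>U. i < f q)"
  unfolding Mf_def using finU by simp

lemma mf_ge: "x \<in> D \<Longrightarrow> f x \<le> mf f"
  using mf_le_iff[of f "mf f"] by auto

lemma Mf_le: "x \<in> U \<Longrightarrow> Mf f \<le> f x"
  unfolding Mf_def using finU by simp

lemma Mf_le_Suc: "Mf f \<le> Suc k"
  unfolding Mf_def using finU by simp

lemma mf_cases: "mf f = 0 \<or> (\<exists>x\<in>D. mf f = f x)"
proof -
  have "mf f \<in> insert 0 (f ` D)" unfolding mf_def using finD by (intro Max_in) auto
  then show ?thesis by auto
qed

lemma Mf_cases: "Mf f = Suc k \<or> (\<exists>x\<in>U. Mf f = f x)"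
proof -
  have "Mf f \<in> insert (Suc k) (f ` U)" unfolding Mf_def using finU by (intro Min_in) auto
  then show ?thesis by auto
qed

lemma DP: "D \<subseteq> P - {p}" by (auto simp: D_def)
lemma UP: "U \<subseteq> P - {p}" by (auto simp: U_def)

lemma Fk_mono: "f \<in> Fk \<Longrightarrow> x \<in> P \<Longrightarrow> y \<in> P \<Longrightarrow> le x y \<Longrightarrow> f x \<le> f y"
  by (simp add: Fk_def)

lemma Fk_bound: "f \<in> Fk \<Longrightarrow> f x \<le> Suc k"
  by (cases "x \<in> P") (auto simp: Fk_def)

lemma Fk_basic:
  assumes f: "f \<in> Fk"
  shows "mf f \<le> f p" "f p \<le> Mf f"
proof -
  show "mf f \<le> f p" unfolding mf_le_iff using f pP by (auto simp: D_def intro: Fk_mono)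
  show "f p \<le> Mf f"
    using Mf_cases[of f] Fk_bound[OF f, of p] Fk_mono[OF f pP] by (auto simp: U_def)
qed

lemma plus_sum:
  assumes f: "f \<in> Fk"
  shows "(\<Sum>i<Suc k. toggle_plus P le p {x\<in>P. f x \<le> i}) = real (f p - mf f)"
proof -
  have "(\<Sum>i<Suc k. toggle_plus P le p {x\<in>P. f x \<le> i}) =
        (\<Sum>i<Suc k. if mf f \<le> i \<and> i < f p then 1 else 0)"
  proof (rule sum.cong[OF refl])
    fix i
    have "(\<forall>q\<in>P - {x\<in>P. f x \<le> i}. le q p \<longrightarrow> q = p) \<longleftrightarrow> (\<forall>q\<in>D. f q \<le> i)"
      by (auto simp: D_def)
    then show "toggle_plus P le p {x\<in>P. f x \<le> i} = (if mf f \<le> i \<and> i < f p then 1 else 0)"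
      using pP by (auto simp: toggle_plus_def mf_le_iff)
  qed
  also have "\<dots> = real (card {i\<in>{..<Suc k}. mf f \<le> i \<and> i < f p})"
    by (rule sum_indicator) simp
  also have "{i\<in>{..<Suc k}. mf f \<le> i \<and> i < f p} = {mf f..<f p}"
    using Fk_bound[OF f, of p] by auto
  finally show ?thesis by simp
qed

lemma minus_sum:
  assumes f: "f \<in> Fk"
  shows "(\<Sum>i<Suc k. toggle_minus P le p {x\<in>P. f x \<le> i}) = real (Mf f - f p)"
proof -
  have "(\<Sum>i<Suc k. toggle_minus P le p {x\<in>P. f x \<le> i}) =
        (\<Sum>i<Suc k. if f p \<le> i \<and> i < Mf f then 1 else 0)"
  proof (rule sum.cong)
    fix i assume "i \<in> {..<Suc k}"
    then have i: "i < Suc k" by simp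
    have "(\<forall>q\<in>{x\<in>P. f x \<le> i}. le p q \<longrightarrow> q = p) \<longleftrightarrow> (\<forall>q\<in>U. i < f q)"
      by (auto simp: U_def)
    then show "toggle_minus P le p {x\<in>P. f x \<le> i} = (if f p \<le> i \<and> i < Mf f then 1 else 0)"
      using pP Mf_gt_iff[OF i, of f] by (auto simp: toggle_minus_def)
  qed simp
  also have "\<dots> = real (card {i\<in>{..<Suc k}. f p \<le> i \<and> i < Mf f})"
    by (rule sum_indicator) simp
  also have "{i\<in>{..<Suc k}. f p \<le> i \<and> i < Mf f} = {f p..<Mf f}"
    using Mf_le_Suc[of f] by auto
  finally show ?thesis by simp
qed


definition shift :: "nat \<Rightarrow> nat \<Rightarrow> nat \<Rightarrow> nat" where
  "shift v w y = (if v < y \<and> y \<le> w then y - 1 else if w \<le> y \<and> y < v then y + 1 else y)"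

lemma shift_mono: "a \<le> b \<Longrightarrow> shift v w a \<le> shift v w b"
  unfolding shift_def by auto

lemma shift_inv: "y \<noteq> v \<Longrightarrow> shift w v (shift v w y) = y"
  unfolding shift_def by auto

lemma shift_neq: "y \<noteq> v \<Longrightarrow> shift v w y \<noteq> w"
  unfolding shift_def by auto

lemma shift_le: "y \<le> Suc k \<Longrightarrow> v \<le> Suc k \<Longrightarrow> shift v w y \<le> Suc k"
  unfolding shift_def by auto

lemma shift_fix_low: "y < v \<Longrightarrow> y < w \<Longrightarrow> shift v w y = y"
  unfolding shift_def by auto

lemma shift_fix_high: "v < y \<Longrightarrow> w < y \<Longrightarrow> shift v w y = y"
  unfolding shift_def by auto

lemma shift_surj:
  assumes "j \<noteq> w" "1 \<le> j" "j \<le> k" "1 \<le> v" "v \<le> k" "1 \<le> w" "w \<le> k"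
  shows "\<exists>y. 1 \<le> y \<and> y \<le> k \<and> y \<noteq> v \<and> shift v w y = j"
proof -
  define y where "y = (if v < w \<and> v \<le> j \<and> j < w then j+1 else if w < v \<and> w < j \<and> j \<le> v then j - 1 else j)"
  have "1 \<le> y \<and> y \<le> k \<and> y \<noteq> v \<and> shift v w y = j"
    using assms unfolding y_def shift_def by auto
  then show ?thesis by blast
qed

definition full :: "('a \<Rightarrow> nat) \<Rightarrow> bool" where
  "full f \<longleftrightarrow> (\<forall>j. 1 \<le> j \<and> j \<le> k \<longrightarrow> (\<exists>x\<in>P-{p}. f x = j))"

definition sig :: "('a \<Rightarrow> nat) \<Rightarrow> 'a \<Rightarrow> nat" where
  "sig f = (if full f then f(p := mf f + Mf f - f p)
            else (\<lambda>x. if x \<notin> P then 0 else if x = p then mf f + Mf f - f p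
                       else shift (f p) (mf f + Mf f - f p) (f x)))"

lemma notfull:
  assumes f: "f \<in> Fk" and nf: "\<not> full f"
  shows "1 \<le> f p" "f p \<le> k" "\<And>x. x \<in> P - {p} \<Longrightarrow> f x \<noteq> f p" "mf f < f p" "f p < Mf f"
proof -
  obtain j where j: "1 \<le> j" "j \<le> k" and nj: "\<And>x. x \<in> P - {p} \<Longrightarrow> f x \<noteq> j"
    using nf unfolding full_def by blast
  obtain x where x: "x \<in> P" "f x = j" using f j unfolding Fk_def by blast
  have "x = p" using nj x by blast
  then have jv: "j = f p" using x by simp
  show "1 \<le> f p" "f p \<le> k" using j jv by auto
  show ne: "\<And>x. x \<in> P - {p} \<Longrightarrow> f x \<noteq> f p" using nj jv by simp
  have "mf f \<noteq> f p"
    using mf_cases[of f] DP ne \<open>1 \<le> f p\<close> by force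
  then show "mf f < f p" using Fk_basic[OF f] by simp
  have "Mf f \<noteq> f p"
    using Mf_cases[of f] UP ne \<open>f p \<le> k\<close> by force
  then show "f p < Mf f" using Fk_basic[OF f] by simp
qed

lemma sig_p: "sig f p = mf f + Mf f - f p"
  using pP by (simp add: sig_def)

lemma sig_agree:
  assumes f: "f \<in> Fk" and x: "x \<in> D \<union> U"
  shows "sig f x = f x"
proof (cases "full f")
  case True then show ?thesis using x DP UP by (auto simp: sig_def)
next
  case False
  note nf = notfull[OF f False]
  have xP: "x \<in> P" "x \<noteq> p" using x DP UP by auto
  show ?thesis
  proof (cases "x \<in> D")
    case True
    then have "f x \<le> mf f" by (rule mf_ge)
    then have "shift (f p) (mf f + Mf f - f p) (f x) = f x"
      using nf by (intro shift_fix_low) auto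
    then show ?thesis using False xP by (simp add: sig_def)
  next
    case False
    then have "x \<in> U" using x by simp
    then have "Mf f \<le> f x" by (rule Mf_le)
    then have "shift (f p) (mf f + Mf f - f p) (f x) = f x"
      using nf by (intro shift_fix_high) auto
    then show ?thesis using \<open>\<not> full f\<close> xP by (simp add: sig_def)
  qed
qed

lemma sig_mf: "f \<in> Fk \<Longrightarrow> mf (sig f) = mf f"
  unfolding mf_def using sig_agree[of f] by (metis (no_types, lifting) UnI1 image_cong)

lemma sig_Mf: "f \<in> Fk \<Longrightarrow> Mf (sig f) = Mf f"
  unfolding Mf_def using sig_agree[of f] by (metis (no_types, lifting) UnI2 image_cong)

lemma sig_in:
  assumes f: "f \<in> Fk"
  shows "sig f \<in> Fk"
proof -
  let ?v = "f p" and ?w = "mf f + Mf f - f p"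
  have b: "mf f \<le> f p" "f p \<le> Mf f" using Fk_basic[OF f] by auto
  have wM: "?w \<le> Mf f" "mf f \<le> ?w" using b by auto
  have wk: "?w \<le> Suc k" using wM Mf_le_Suc[of f] by simp
  show ?thesis
  proof (cases "full f")
    case True
    have sf: "sig f = f(p := ?w)" using True by (simp add: sig_def)
    show ?thesis unfolding Fk_def
    proof (intro CollectI conjI allI ballI impI)
      fix x assume "x \<notin> P" then show "sig f x = 0" using f pP sf by (auto simp: Fk_def)
    next
      fix x assume "x \<in> P" then show "sig f x \<le> Suc k" using sf wk Fk_bound[OF f, of x] by auto
    next
      fix x y assume xy: "x \<in> P" "y \<in> P" "le x y"
      show "sig f x \<le> sig f y"
      proof (cases "x = p")
        case True
        show ?thesis
        proof (cases "y = p")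
          case False
          then have "y \<in> U" using xy True by (simp add: U_def)
          then show ?thesis using Mf_le[of y f] wM True False sf by simp
        qed (simp add: True)
      next
        case False
        show ?thesis
        proof (cases "y = p")
          case True
          then have "x \<in> D" using xy False by (simp add: D_def)
          then show ?thesis using mf_ge[of x f] wM True False sf by simp
        next
          case False
          then show ?thesis using \<open>x \<noteq> p\<close> sf Fk_mono[OF f xy] by simp
        qed
      qed
    next
      fix j assume j: "1 \<le> j \<and> j \<le> k"
      then obtain x where "x \<in> P - {p}" "f x = j" using True unfolding full_def by blast
      then show "\<exists>x\<in>P. sig f x = j" using sf by (intro bexI[of _ x]) auto
    qed
  next
    case False
    note nf = notfull[OF f False]
    have sf: "sig f = (\<lambda>x. if x \<notin> P then 0 else if x = p then ?w else shift ?v ?w (f x))"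
      using False by (simp add: sig_def)
    have w1: "1 \<le> ?w" "?w \<le> k" using nf Mf_le_Suc[of f] by auto
    show ?thesis unfolding Fk_def
    proof (intro CollectI conjI allI ballI impI)
      fix x assume "x \<notin> P" then show "sig f x = 0" using sf by simp
    next
      fix x assume "x \<in> P" then show "sig f x \<le> Suc k"
        using sf wk Fk_bound[OF f, of x] shift_le[of "f x" ?v ?w] nf by auto
    next
      fix x y assume xy: "x \<in> P" "y \<in> P" "le x y"
      show "sig f x \<le> sig f y"
      proof (cases "x = p")
        case True
        show ?thesis
        proof (cases "y = p")
          case False
          then have "y \<in> U" using xy True by (simp add: U_def)
          then have "sig f y = f y" using sig_agree[OF f] by simp
          then show ?thesis using Mf_le[OF \<open>y \<in> U\<close>, of f] wM True sig_p[of f] by simp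
        qed (simp add: True)
      next
        case False
        show ?thesis
        proof (cases "y = p")
          case True
          then have "x \<in> D" using xy False by (simp add: D_def)
          then have "sig f x = f x" using sig_agree[OF f] by simp
          then show ?thesis using mf_ge[OF \<open>x \<in> D\<close>, of f] wM True sig_p[of f] by simp
        next
          case False
          then show ?thesis using \<open>x \<noteq> p\<close> sf xy Fk_mono[OF f xy] shift_mono by simp
        qed
      qed
    next
      fix j assume j: "1 \<le> j \<and> j \<le> k"
      show "\<exists>x\<in>P. sig f x = j"
      proof (cases "j = ?w")
        case True then show ?thesis using pP sig_p[of f] by blast
      next
        case False
        obtain y where y: "1 \<le> y" "y \<le> k" "y \<noteq> ?v" "shift ?v ?w y = j"
          using shift_surj[OF False] j nf w1 by blast
        obtain x where x: "x \<in> P" "f x = y" using f y unfolding Fk_def by blast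
        have "x \<noteq> p" using x y by auto
        then show ?thesis using x y sf by (intro bexI[of _ x]) auto
      qed
    qed
  qed
qed

lemma sig_full: 
  assumes f: "f \<in> Fk"
  shows "full (sig f) \<longleftrightarrow> full f"
proof (cases "full f")
  case True
  then have "\<forall>x\<in>P - {p}. sig f x = f x" by (simp add: sig_def)
  then show ?thesis using True unfolding full_def by (metis)
next
  case False
  note nf = notfull[OF f False]
  let ?v = "f p" and ?w = "mf f + Mf f - f p"
  have w1: "1 \<le> ?w" "?w \<le> k" using nf Mf_le_Suc[of f] by auto
  have "\<forall>x\<in>P-{p}. sig f x \<noteq> ?w"
  proof
    fix x assume x: "x \<in> P - {p}"
    then have "sig f x = shift ?v ?w (f x)" using False by (simp add: sig_def)
    then show "sig f x \<noteq> ?w" using shift_neq nf(3)[OF x] by simp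
  qed
  then have "\<not> full (sig f)" unfolding full_def using w1 by blast
  then show ?thesis using False by simp
qed

lemma sig_sig:
  assumes f: "f \<in> Fk"
  shows "sig (sig f) = f"
proof -
  let ?v = "f p" and ?w = "mf f + Mf f - f p"
  have b: "mf f \<le> f p" "f p \<le> Mf f" using Fk_basic[OF f] by auto
  have new: "mf (sig f) + Mf (sig f) - sig f p = f p"
    using sig_mf[OF f] sig_Mf[OF f] sig_p[of f] b by simp
  show ?thesis
  proof (cases "full f")
    case True
    then have "full (sig f)" using sig_full[OF f] by simp
    then have "sig (sig f) = (sig f)(p := f p)" using new by (simp add: sig_def)
    also have "\<dots> = f" using True by (simp add: sig_def)
    finally show ?thesis .
  next
    case False
    note nf = notfull[OF f False]
    then have nf2: "\<not> full (sig f)" using sig_full[OF f] False by simp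
    show ?thesis
    proof
      fix x
      show "sig (sig f) x = f x"
      proof (cases "x \<in> P")
        case False then show ?thesis using f nf2 by (simp add: sig_def Fk_def)
      next
        case xP: True
        show ?thesis
        proof (cases "x = p")
          case True then show ?thesis using nf2 new xP by (simp add: sig_def)
        next
          case xp: False
          have s1: "sig f x = shift ?v ?w (f x)" using \<open>\<not> full f\<close> xP xp by (simp add: sig_def)
          have "sig (sig f) x = shift (sig f p) (f p) (sig f x)"
            using nf2 new xP xp by (simp add: sig_def[of "sig f"])
          also have "\<dots> = shift ?w ?v (shift ?v ?w (f x))" using s1 sig_p[of f] by simp
          also have "\<dots> = f x" using shift_inv nf(3) xP xp by simp
          finally show ?thesis .
        qed
      qed
    qed
  qed
qed


lemma involution: "(\<Sum>f\<in>Fk. real (f p - mf f)) = (\<Sum>f\<in>Fk. real (Mf f - f p))"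
proof (rule sum.reindex_bij_witness[where i = sig and j = sig])
  fix f assume f: "f \<in> Fk"
  show "sig (sig f) = f" using sig_sig[OF f] .
  show "sig f \<in> Fk" using sig_in[OF f] .
  have b: "mf f \<le> f p" "f p \<le> Mf f" using Fk_basic[OF f] by auto
  show "real (Mf (sig f) - sig f p) = real (f p - mf f)"
    using sig_Mf[OF f] sig_p[of f] b by simp
qed (auto simp: sig_sig sig_in)

lemma main:
  "expect P le (chain_prob P le k) (toggle_plus P le p) = expect P le (chain_prob P le k) (toggle_minus P le p)"
proof -
  let ?C = "k_chains P le k"
  have eq: "(\<Sum>c\<in>?C. G c) = (\<Sum>f\<in>Fk. G (chain_of f))" for G :: "'a set list \<Rightarrow> real"
    using sum.reindex_bij_betw[OF bij_chain_of, of G] by simp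
  have "(\<Sum>c\<in>?C. \<Sum>i<Suc k. toggle_plus P le p (c!i)) = (\<Sum>f\<in>Fk. real (f p - mf f))"
    unfolding eq
  proof (rule sum.cong[OF refl])
    fix f assume f: "f \<in> Fk"
    have "(\<Sum>i<Suc k. toggle_plus P le p (chain_of f ! i)) = (\<Sum>i<Suc k. toggle_plus P le p {x\<in>P. f x \<le> i})"
      by (rule sum.cong[OF refl]) (simp add: chain_of_nth)
    then show "(\<Sum>i<Suc k. toggle_plus P le p (chain_of f ! i)) = real (f p - mf f)"
      using plus_sum[OF f] by simp
  qed
  moreover have "(\<Sum>c\<in>?C. \<Sum>i<Suc k. toggle_minus P le p (c!i)) = (\<Sum>f\<in>Fk. real (Mf f - f p))"
    unfolding eq
  proof (rule sum.cong[OF refl])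
    fix f assume f: "f \<in> Fk"
    have "(\<Sum>i<Suc k. toggle_minus P le p (chain_of f ! i)) = (\<Sum>i<Suc k. toggle_minus P le p {x\<in>P. f x \<le> i})"
      by (rule sum.cong[OF refl]) (simp add: chain_of_nth)
    then show "(\<Sum>i<Suc k. toggle_minus P le p (chain_of f ! i)) = real (Mf f - f p)"
      using minus_sum[OF f] by simp
  qed
  ultimately show ?thesis unfolding expect_red using involution by simp
qed

end

theorem lemma3p3:
  fixes P :: "'a set" and le :: "'a \<Rightarrow> 'a \<Rightarrow> bool" and k :: nat
  assumes "finite P" and "is_poset P le" and "k \<le> card P"
  shows "toggle_symmetric P le (chain_prob P le k)"
  unfolding toggle_symmetric_def
proof
  fix p assume "p \<in> P"
  interpret tg P le k p using assms(1) \<open>p \<in> P\<close> by unfold_locales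
  show "expect P le (chain_prob P le k) (toggle_plus P le p) = expect P le (chain_prob P le k) (toggle_minus P le p)"
    by (rule main)
qed

end
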